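(* Let $p\in\mathbb R^n$, $\omega\in\mathbb R^p$, let $\xi=p^aP_a+\omega^iL_i$ and let $\psi_t$ be the one-parameter group of isometries generated by $\xi$, $\hat x=\psi_t(x)$. Define $O^a{}_b=e^a{}_{\hat\alpha}(\hat x)\,\frac{\partial\hat x^\alpha}{\partial x^\mu}\,e_b{}^\mu(x)$. Then for $p=0$ and $x=x'$ (i.e. $y=0$), $$O\big|_{p=y=0}=\exp[-tD(\omega)],\qquad D(\omega)=\omega^iD_i.$$
   Context: $(M,g)$ is an $n$-dimensional complete simply connected Riemannian manifold with parallel Riemann tensor (a Riemannian symmetric space). Fix $x'\in M$ and an orthonormal frame $e_a{}^\mu(x')$ at $x'$, extended to a neighbourhood to an orthonormal frame $e_a{}^\mu(x)$ by parallel transport along the geodesics from $x'$, with dual coframe $e^a{}_\mu$; let $y^a$ be the corresponding Riemann normal coordinates centred at $x'$. Frame indices $a,b,\dots\in\{1,\dots,n\}$ are raised/lowered with $\delta_{ab}$; $R_{abcd}$ are the frame components of the curvature at $x'$. The curvature is written as $R_{abcd}=\beta_{ik}E^i{}_{ab}E^k{}_{cd}$ with $E^i{}_{ab}$ ($i=1,\dots,p$) antisymmetric $n\times n$ matrices and $(\beta_{ik})$ real symmetric nondegenerate; $D^a{}_{ib}=-\beta_{ik}E^k{}_{cb}\delta^{ca}$. With $K^a{}_b=R^a{}_{cbd}y^cy^d$, the Killing vector fields are $P_a=(\sqrt K\cot\sqrt K)^b{}_a\,\partial/\partial y^b$ and $L_i=-D^b{}_{ia}y^a\,\partial/\partial y^b$.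 *)

theory Defs
  imports "HOL-Analysis.Analysis"
begin

text \<open>Square matrices are real^'n^'n (row index first).  Frame indices a,b range over
  the finite type 'n (dimension n = CARD('n)); the indices i,k of the curvature
  decomposition range over the finite type 'p.\<close>

definition mat_pow :: "real^'n^'n \<Rightarrow> nat \<Rightarrow> real^'n^'n" where
  "mat_pow A k = (((**) A) ^^ k) (mat 1)"

definition mat_exp :: "real^'n^'n \<Rightarrow> real^'n^'n" where
  "mat_exp A = (\<Sum>k. (1 / fact k) *\<^sub>R mat_pow A k)"

definition curv :: "real^'p^'p \<Rightarrow> ('p \<Rightarrow> real^'n^'n) \<Rightarrow> 'n \<Rightarrow> 'n \<Rightarrow> 'n \<Rightarrow> 'n \<Rightarrow> real" where
  "curv \<beta> E a b c d = (\<Sum>i\<in>UNIV. \<Sum>k\<in>UNIV. \<beta>$i$k * (E i)$a$b * (E k)$c$d)"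

text \<open>D^a_{ib} = - beta_ik E^k_{cb} delta^{ca} = - beta_ik E^k_{ab}; matrix D_i with
  entry (a,b).\<close>
definition Dmat :: "real^'p^'p \<Rightarrow> ('p \<Rightarrow> real^'n^'n) \<Rightarrow> 'p \<Rightarrow> real^'n^'n" where
  "Dmat \<beta> E i = (\<chi> a b. - (\<Sum>k\<in>UNIV. \<beta>$i$k * (E k)$a$b))"

definition Domega :: "real^'p^'p \<Rightarrow> ('p \<Rightarrow> real^'n^'n) \<Rightarrow> real^'p \<Rightarrow> real^'n^'n" where
  "Domega \<beta> E \<omega> = (\<Sum>i\<in>UNIV. \<omega>$i *\<^sub>R Dmat \<beta> E i)"

text \<open>Killing field L_i in normal coordinates y: L_i = - D^b_{ia} y^a d/dy^b.\<close>
definition Lfield :: "real^'p^'p \<Rightarrow> ('p \<Rightarrow> real^'n^'n) \<Rightarrow> 'p \<Rightarrow> real^'n \<Rightarrow> real^'n" where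
  "Lfield \<beta> E i y = (\<chi> b. - (\<Sum>a\<in>UNIV. (Dmat \<beta> E i)$b$a * y$a))"

definition xi0 :: "real^'p^'p \<Rightarrow> ('p \<Rightarrow> real^'n^'n) \<Rightarrow> real^'p \<Rightarrow> real^'n \<Rightarrow> real^'n" where
  "xi0 \<beta> E \<omega> y = (\<Sum>i\<in>UNIV. \<omega>$i *\<^sub>R Lfield \<beta> E i y)"

end

theory Submission
  imports Defs
begin

typedef (overloaded) ('n::finite) opr = "UNIV :: ((real^'n) \<Rightarrow>\<^sub>L (real^'n)) set" morphisms rep_opr Abs_opr by auto
setup_lifting type_definition_opr

instantiation opr :: (finite) real_normed_vector
begin
lift_definition zero_opr :: "'a opr" is "0::(real^'a) \<Rightarrow>\<^sub>L (real^'a)" .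
lift_definition plus_opr :: "'a opr \<Rightarrow> 'a opr \<Rightarrow> 'a opr" is "(+)::(real^'a) \<Rightarrow>\<^sub>L (real^'a) \<Rightarrow> _ \<Rightarrow> _" .
lift_definition minus_opr :: "'a opr \<Rightarrow> 'a opr \<Rightarrow> 'a opr" is "(-)::(real^'a) \<Rightarrow>\<^sub>L (real^'a) \<Rightarrow> _ \<Rightarrow> _" .
lift_definition uminus_opr :: "'a opr \<Rightarrow> 'a opr" is "uminus::(real^'a) \<Rightarrow>\<^sub>L (real^'a) \<Rightarrow> _" .
lift_definition scaleR_opr :: "real \<Rightarrow> 'a opr \<Rightarrow> 'a opr" is "scaleR::real \<Rightarrow> (real^'a) \<Rightarrow>\<^sub>L (real^'a) \<Rightarrow> _" .
lift_definition norm_opr :: "'a opr \<Rightarrow> real" is "norm::(real^'a) \<Rightarrow>\<^sub>L (real^'a) \<Rightarrow> real" .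
lift_definition dist_opr :: "'a opr \<Rightarrow> 'a opr \<Rightarrow> real" is "dist::(real^'a) \<Rightarrow>\<^sub>L (real^'a) \<Rightarrow> _ \<Rightarrow> real" .
definition sgn_opr :: "'a opr \<Rightarrow> 'a opr" where "sgn_opr x = scaleR (inverse (norm x)) x"
definition uniformity_opr :: "('a opr \<times> 'a opr) filter" where
  "uniformity_opr = (INF e\<in>{0 <..}. principal {(x, y). dist x y < e})"
definition open_opr :: "'a opr set \<Rightarrow> bool" where
  "open_opr S = (\<forall>x\<in>S. \<forall>\<^sub>F (x', y) in uniformity. x' = x \<longrightarrow> y \<in> S)"
instance
  apply standard
  unfolding sgn_opr_def uniformity_opr_def open_opr_def
  apply (rule refl | (transfer, force simp: dist_norm norm_triangle_ineq algebra_simps))+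
  done
end

instantiation opr :: (finite) real_normed_algebra_1
begin
lift_definition times_opr :: "'a opr \<Rightarrow> 'a opr \<Rightarrow> 'a opr" is "blinfun_compose::(real^'a) \<Rightarrow>\<^sub>L (real^'a) \<Rightarrow> _ \<Rightarrow> _" .
lift_definition one_opr :: "'a opr" is "id_blinfun::(real^'a) \<Rightarrow>\<^sub>L (real^'a)" .
instance
proof
  show "(0::'a opr) \<noteq> 1"
  proof transfer
    have "(0::(real^'a) \<Rightarrow>\<^sub>L (real^'a)) (axis undefined 1) \<noteq> id_blinfun (axis undefined 1)"
      by (simp add: axis_eq_0_iff)
    then show "(0::(real^'a) \<Rightarrow>\<^sub>L (real^'a)) \<noteq> id_blinfun" by metis
  qed
  show "norm (1::'a opr) = 1" by transfer simp
qed (transfer; auto intro!: blinfun_eqI simp: blinfun.bilinear_simps norm_blinfun_compose)+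
end

instance opr :: (finite) banach
proof
  fix X :: "nat \<Rightarrow> 'a opr"
  assume "Cauchy X"
  then have "Cauchy (\<lambda>k. rep_opr (X k))"
    unfolding Cauchy_def by (simp add: dist_opr.rep_eq)
  then obtain L where L: "(\<lambda>k. rep_opr (X k)) \<longlonglongrightarrow> L"
    using convergent_def Cauchy_convergent_iff by blast
  have "X \<longlonglongrightarrow> Abs_opr L"
    using L unfolding tendsto_iff by (simp add: dist_opr.rep_eq Abs_opr_inverse)
  then show "convergent X" by (auto simp: convergent_def)
qed


definition app :: "'n::finite opr \<Rightarrow> real^'n \<Rightarrow> real^'n" where
  "app X v = blinfun_apply (rep_opr X) v"

lemma app_times: "app (X * Y) v = app X (app Y v)"
  unfolding app_def by (simp add: times_opr.rep_eq)
lemma app_one: "app 1 v = v"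
  unfolding app_def by (simp add: one_opr.rep_eq)
lemma bounded_bilinear_app: "bounded_bilinear (app :: 'n::finite opr \<Rightarrow> _)"
proof -
  have "bounded_bilinear (\<lambda>(X::'n opr) v. blinfun_apply (rep_opr X) v)"
  proof
    show "\<exists>K. \<forall>a b. norm (blinfun_apply (rep_opr a) b) \<le> norm a * norm b * K"
      by (rule exI[where x=1]) (simp add: norm_opr.rep_eq norm_blinfun)
  qed (simp_all add: plus_opr.rep_eq scaleR_opr.rep_eq blinfun.bilinear_simps)
  then show ?thesis unfolding app_def .
qed
interpretation app: bounded_bilinear app by (rule bounded_bilinear_app)

lemma linear_app: "linear (app X)"
  using app.bounded_linear_right bounded_linear.linear by blast

definition mop :: "'n::finite opr \<Rightarrow> real^'n^'n" where "mop X = matrix (app X)"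
definition opm :: "real^'n^'n \<Rightarrow> 'n::finite opr" where "opm A = Abs_opr (Blinfun (\<lambda>v. A *v v))"

lemma app_opm: "app (opm A) v = A *v v"
proof -
  have bl: "bounded_linear (\<lambda>v. A *v v)"
    by (simp add: linear_conv_bounded_linear)
  then show ?thesis unfolding app_def opm_def
    using Abs_opr_inverse[of "Blinfun (\<lambda>v. A *v v)"] bounded_linear_Blinfun_apply[OF bl] by auto
qed

lemma mop_opm: "mop (opm A) = A"
  unfolding mop_def app_opm[abs_def] by simp

lemma mop_times: "mop (X * Y) = mop X ** mop Y"
proof -
  have "app (X*Y) = app X \<circ> app Y" by (auto simp: app_times)
  then show ?thesis unfolding mop_def using matrix_compose[OF linear_app linear_app] by simp
qed

lemma mop_one: "mop 1 = mat 1"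
proof -
  have "app 1 = id" by (auto simp: app_one)
  then show ?thesis unfolding mop_def by (metis matrix_id_mat_1)
qed

lemma mop_pow: "mop (X ^ k) = mat_pow (mop X) k"
  by (induction k) (simp_all add: mat_pow_def mop_one mop_times)

lemma mop_entry: "mop X $ i $ j = app X (axis j 1) $ i"
  unfolding mop_def matrix_def by simp

lemma bounded_linear_mop: "bounded_linear (mop :: 'n::finite opr \<Rightarrow> _)"
proof
  fix X Y :: "'n opr" and r :: real
  show "mop (X + Y) = mop X + mop Y"
    by (simp add: vec_eq_iff mop_entry app.add_left)
  show "mop (r *\<^sub>R X) = r *\<^sub>R mop X"
    by (simp add: vec_eq_iff mop_entry app.scaleR_left)
  have "norm (mop X) \<le> norm X * (real CARD('n) * real CARD('n))" for X :: "'n opr"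
  proof -
    have e: "\<bar>mop X $ i $ j\<bar> \<le> norm X" for i j
    proof -
      have "\<bar>mop X $ i $ j\<bar> \<le> norm (app X (axis j 1))"
        unfolding mop_entry by (rule component_le_norm_cart)
      also have "\<dots> \<le> norm X * norm (axis j (1::real))"
        unfolding app_def norm_opr.rep_eq by (rule norm_blinfun)
      finally show ?thesis by simp
    qed
    have r: "norm (mop X $ i) \<le> norm X * real CARD('n)" for i
    proof -
      have "norm (mop X $ i) \<le> (\<Sum>j\<in>UNIV. \<bar>mop X $ i $ j\<bar>)" by (rule norm_le_l1_cart)
      also have "\<dots> \<le> (\<Sum>j\<in>(UNIV::'n set). norm X)" by (rule sum_mono) (rule e)
      finally show ?thesis by (simp add: mult.commute)
    qed
    have "norm (mop X) \<le> (\<Sum>i\<in>UNIV. norm (mop X $ i))"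
      by (simp add: norm_vec_def L2_set_le_sum)
    also have "\<dots> \<le> (\<Sum>i\<in>(UNIV::'n set). norm X * real CARD('n))" by (rule sum_mono) (rule r)
    finally show ?thesis by (simp add: algebra_simps)
  qed
  then show "\<exists>K. \<forall>X. norm (mop (X::'n opr)) \<le> norm X * K" by blast
qed

lemma mop_scaleR: "mop (r *\<^sub>R X) = r *\<^sub>R mop X"
  by (simp add: vec_eq_iff mop_entry app.scaleR_left)

lemma mop_exp: "mop (exp X) = mat_exp (mop X)"
proof -
  have "(\<lambda>k. (1 / fact k) *\<^sub>R X ^ k) sums exp X"
    using exp_converges[of X] by (simp add: divide_inverse_commute scaleR_conv_of_real)
  from bounded_linear.sums[OF bounded_linear_mop this]
  have "(\<lambda>k. (1 / fact k) *\<^sub>R mat_pow (mop X) k) sums mop (exp X)"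
    by (simp add: mop_scaleR mop_pow)
  then show ?thesis unfolding mat_exp_def by (simp add: sums_iff)
qed


lemma xi0_eq: "xi0 \<beta> E \<omega> y = (- Domega \<beta> E \<omega>) *v y"
  unfolding xi0_def Lfield_def Domega_def
proof (rule vec_eq_iff[THEN iffD2, rule_format])
  fix b
  have "(\<Sum>i\<in>UNIV. \<omega> $ i * - (\<Sum>a\<in>UNIV. Dmat \<beta> E i $ b $ a * y $ a))
      = (\<Sum>a\<in>UNIV. - (\<Sum>i\<in>UNIV. \<omega> $ i * Dmat \<beta> E i $ b $ a) * y $ a)"
  proof -
    have "(\<Sum>i\<in>UNIV. \<omega> $ i * - (\<Sum>a\<in>UNIV. Dmat \<beta> E i $ b $ a * y $ a))
      = - (\<Sum>i\<in>UNIV. \<Sum>a\<in>UNIV. \<omega> $ i * Dmat \<beta> E i $ b $ a * y $ a)"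
      by (simp only: sum_distrib_left mult_minus_right sum_negf mult.assoc)
    also have "\<dots> = - (\<Sum>a\<in>UNIV. \<Sum>i\<in>UNIV. \<omega> $ i * Dmat \<beta> E i $ b $ a * y $ a)"
      by (rule arg_cong[where f=uminus], rule sum.swap)
    also have "\<dots> = (\<Sum>a\<in>UNIV. - (\<Sum>i\<in>UNIV. \<omega> $ i * Dmat \<beta> E i $ b $ a) * y $ a)"
      by (simp only: sum_distrib_right mult_minus_left sum_negf)
    finally show ?thesis .
  qed
  then show "(\<Sum>i\<in>UNIV. \<omega> $ i *\<^sub>R (\<chi> b. - (\<Sum>a\<in>UNIV. Dmat \<beta> E i $ b $ a * y $ a))) $ b =
    (- (\<Sum>i\<in>UNIV. \<omega> $ i *\<^sub>R Dmat \<beta> E i) *v y) $ b"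
    by (simp add: matrix_vector_mult_def sum_component)
qed

lemma matrix_inv_one: "matrix_inv (mat 1 :: real^'n^'n) = mat 1"
  unfolding matrix_inv_def by (rule some_equality) (simp_all add: matrix_mul_lid matrix_mul_rid)

theorem mainTheorem5:
  fixes \<beta> :: "real^'p^'p" and E :: "'p \<Rightarrow> real^'n^'n" and \<omega> :: "real^'p"
    and \<psi> :: "real \<Rightarrow> real^'n \<Rightarrow> real^'n"
    and e :: "real^'n \<Rightarrow> real^'n^'n"
    and J :: "real^'n^'n" and t :: real and V :: "(real^'n) set"
  assumes E_antisym: "\<And>i. transpose (E i) = - E i"
    and \<beta>_sym: "transpose \<beta> = \<beta>"
    and \<beta>_nondeg: "det \<beta> \<noteq> 0"
    and V: "open V" "0 \<in> V"
    and flow0: "\<And>y. y \<in> V \<Longrightarrow> \<psi> 0 y = y"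
    and flow: "\<And>y s. y \<in> V \<Longrightarrow> s \<in> closed_segment 0 t \<Longrightarrow>
        ((\<lambda>r. \<psi> r y) has_vector_derivative xi0 \<beta> E \<omega> (\<psi> s y)) (at s within closed_segment 0 t)"
    and frame0: "e 0 = mat 1"
    and frame_inv: "\<And>y. invertible (e y)"
    and jac: "(\<psi> t has_derivative (\<lambda>v. J *v v)) (at 0)"
  shows "matrix_inv (e (\<psi> t 0)) ** J ** e 0 = mat_exp (- (t *\<^sub>R Domega \<beta> E \<omega>))"
proof -
  define A where "A = - Domega \<beta> E \<omega>"
  define B :: "'n opr" where "B = opm A"
  define S where "S = closed_segment 0 t"
  have xi: "xi0 \<beta> E \<omega> z = app B z" for z
    unfolding B_def A_def app_opm xi0_eq ..
  have sol: "\<psi> t y = app (exp (t *\<^sub>R B)) y" if y: "y \<in> V" for y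
  proof -
    define w where "w s = app (exp (s *\<^sub>R (- B))) (\<psi> s y)" for s
    have "(w has_derivative (\<lambda>h. 0)) (at s within S)" if s: "s \<in> S" for s
    proof -
      have "(w has_vector_derivative
          (app (exp (s *\<^sub>R (- B))) (xi0 \<beta> E \<omega> (\<psi> s y)) + app (exp (s *\<^sub>R (- B)) * (- B)) (\<psi> s y)))
          (at s within S)"
        unfolding w_def S_def
        by (rule app.has_vector_derivative[OF exp_scaleR_has_vector_derivative_right flow[OF y s[unfolded S_def]]])
      moreover have "app (exp (s *\<^sub>R (- B))) (xi0 \<beta> E \<omega> (\<psi> s y)) + app (exp (s *\<^sub>R (- B)) * (- B)) (\<psi> s y) = 0"
        by (simp add: xi app_times app.minus_left app.minus_right)
      ultimately show ?thesis by (simp add: has_vector_derivative_def)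
    qed
    then obtain c where c: "\<And>s. s \<in> S \<Longrightarrow> w s = c"
      using has_derivative_zero_constant[of S w] unfolding S_def by auto
    have "w t = w 0" using c unfolding S_def by simp
    also have "w 0 = y" unfolding w_def by (simp add: app_one flow0[OF y])
    finally have wt: "app (exp (- (t *\<^sub>R B))) (\<psi> t y) = y" unfolding w_def by simp
    have "app (exp (t *\<^sub>R B)) y = app (exp (t *\<^sub>R B) * exp (- (t *\<^sub>R B))) (\<psi> t y)"
      by (simp add: app_times wt)
    also have "\<dots> = \<psi> t y" by (simp add: exp_minus_inverse app_one)
    finally show ?thesis ..
  qed
  have "(app (exp (t *\<^sub>R B)) has_derivative app (exp (t *\<^sub>R B))) (at 0)"
    by (rule bounded_linear.has_derivative[OF app.bounded_linear_right]) simp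
  then have "(\<psi> t has_derivative app (exp (t *\<^sub>R B))) (at 0)"
    by (rule has_derivative_transform_within_open[OF _ V]) (simp add: sol)
  from has_derivative_unique[OF jac this]
  have "J = mop (exp (t *\<^sub>R B))"
    unfolding mop_def by (metis matrix_of_matrix_vector_mul)
  also have "\<dots> = mat_exp (- (t *\<^sub>R Domega \<beta> E \<omega>))"
    by (simp add: mop_exp mop_scaleR B_def mop_opm A_def)
  finally have J: "J = mat_exp (- (t *\<^sub>R Domega \<beta> E \<omega>))" .
  have "\<psi> t 0 = 0" using sol[OF V(2)] app.zero_right by simp
  then show ?thesis by (simp add: frame0 matrix_inv_one matrix_mul_lid matrix_mul_rid J)
qed

end
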